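(* Let $d=2b$ be even, $d\geq 4$. Then every half-edge of every $d$-branching mobile has even weight (in $\{0,\dots,d-2\}$). Similarly, for every face-rooted $d$-angulation admitting a $d/(d-2)$-orientation, its minimal $d/(d-2)$-orientation has only even weights.
   Context: A map is a connected finite graph (loops and multiple edges allowed) embedded in the oriented sphere up to orientation-preserving homeomorphism; a $d$-angulation has all faces of degree $d$. A face-rooted map has a marked root-face; vertices and edges incident to it are outer, others inner. A biorientation assigns to each half-edge a direction (ingoing toward its vertex, or outgoing); an edge is $i$-way if $i$ of its half-edges are ingoing. Directed paths follow 2-way edges or 1-way edges toward their ingoing half-edge; a circuit is a simple closed directed path; it is counterclockwise if the root-face is on its right; a biorientation is minimal if it has no counterclockwise circuit. An $\mathbb N$-biorientation gives weights in $\{0,1,2,\dots\}$ to half-edges, positive on ingoing and zero on outgoing ones; edge weight = sum of the two half-edge weights; vertex weight = sum of weights of incident ingoing half-edges. A $d/(d-2)$-orientation of a face-rooted $d$-angulation is an $\mathbb N$-biorientation with inner edges of weight $d-2$, inner vertices of weight $d$, outer edges of weight $1$, outer vertices of weight $1$; if one exists, there is a unique minimal one. A mobile is a plane tree whose vertices are black or white (not necessarily properly), black vertices possibly carrying dangling half-edges (buds). An $\mathbb N$-mobile gives each non-bud half-edge a weight in $\{0,1,2,\dots\}$, positive if incident to a white vertex, zero if incident to a black vertex; vertex weight = sum of weights of incident non-bud half-edges; black-vertex degree counts buds. A $d$-branching mobile is an $\mathbb N$-mobile with all black vertices of degree $d$, all white vertices of weight $d$, all edges of weight $d-2$. *)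

theory Defs
  imports "HOL-Combinatorics.Permutations" "HOL-Combinatorics.Orbits"
begin

text \<open>A map is encoded by a finite set of half-edges (darts) D, a fixed-point-free
involution alpha (pairing the two half-edges of an edge) and a permutation sigma
(the counterclockwise rotation of the half-edges around their vertex).
With this convention the face containing dart h (as an orbit of sigma o alpha) is the face
lying on the right of h when h is traversed from its vertex towards the other end.\<close>

definition verts :: "'d set \<Rightarrow> ('d \<Rightarrow> 'd) \<Rightarrow> 'd set set" where
  "verts D \<sigma> = orbit \<sigma> ` D"

definition edges :: "'d set \<Rightarrow> ('d \<Rightarrow> 'd) \<Rightarrow> 'd set set" where
  "edges D \<alpha> = orbit \<alpha> ` D"

definition faces :: "'d set \<Rightarrow> ('d \<Rightarrow> 'd) \<Rightarrow> ('d \<Rightarrow> 'd) \<Rightarrow> 'd set set" where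
  "faces D \<alpha> \<sigma> = orbit (\<sigma> \<circ> \<alpha>) ` D"

definition map_conn :: "'d set \<Rightarrow> ('d \<Rightarrow> 'd) \<Rightarrow> ('d \<Rightarrow> 'd) \<Rightarrow> ('d \<times> 'd) set" where
  "map_conn D \<alpha> \<sigma> = {(x, y). x \<in> D \<and> y \<in> D \<and> (y = \<alpha> x \<or> y = \<sigma> x)}"

text \<open>A (connected) map embedded in the oriented sphere: Euler characteristic 2.\<close>
definition planar_map :: "'d set \<Rightarrow> ('d \<Rightarrow> 'd) \<Rightarrow> ('d \<Rightarrow> 'd) \<Rightarrow> bool" where
  "planar_map D \<alpha> \<sigma> \<longleftrightarrow>
     finite D \<and> D \<noteq> {} \<and>
     \<alpha> permutes D \<and> (\<forall>h\<in>D. \<alpha> (\<alpha> h) = h \<and> \<alpha> h \<noteq> h) \<and>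
     \<sigma> permutes D \<and>
     (\<forall>x\<in>D. \<forall>y\<in>D. (x, y) \<in> (map_conn D \<alpha> \<sigma>)\<^sup>*) \<and>
     card (verts D \<sigma>) + card (faces D \<alpha> \<sigma>) = card (edges D \<alpha>) + 2"

definition rooted_dangulation ::
  "nat \<Rightarrow> 'd set \<Rightarrow> ('d \<Rightarrow> 'd) \<Rightarrow> ('d \<Rightarrow> 'd) \<Rightarrow> 'd set \<Rightarrow> bool" where
  "rooted_dangulation d D \<alpha> \<sigma> r \<longleftrightarrow>
     planar_map D \<alpha> \<sigma> \<and> (\<forall>f\<in>faces D \<alpha> \<sigma>. card f = d) \<and> r \<in> faces D \<alpha> \<sigma>"

definition outer_dart :: "('d \<Rightarrow> 'd) \<Rightarrow> 'd set \<Rightarrow> 'd \<Rightarrow> bool" where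
  "outer_dart \<alpha> r h \<longleftrightarrow> orbit \<alpha> h \<inter> r \<noteq> {}"

definition outer_vertex :: "'d set \<Rightarrow> 'd set \<Rightarrow> bool" where
  "outer_vertex r v \<longleftrightarrow> v \<inter> r \<noteq> {}"

text \<open>An N-biorientation is a weight function w on half-edges; a half-edge is
ingoing iff its weight is positive.  d/(d-2)-orientation:\<close>
definition dd2_orientation ::
  "nat \<Rightarrow> 'd set \<Rightarrow> ('d \<Rightarrow> 'd) \<Rightarrow> ('d \<Rightarrow> 'd) \<Rightarrow> 'd set \<Rightarrow> ('d \<Rightarrow> nat) \<Rightarrow> bool" where
  "dd2_orientation d D \<alpha> \<sigma> r w \<longleftrightarrow>
     (\<forall>h\<in>D. w h + w (\<alpha> h) = (if outer_dart \<alpha> r h then 1 else d - 2)) \<and>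
     (\<forall>v\<in>verts D \<sigma>. (\<Sum>h\<in>v. w h) = (if outer_vertex r v then 1 else d))"

text \<open>Circuits: a list of darts hs = [h_0,...,h_(k-1)], where h_i leaves vertex v_i and
arrives at v_(i+1) (indices mod k) through the half-edge alpha h_i, which must be
ingoing (this covers 2-way edges and 1-way edges traversed towards their ingoing
half-edge); the vertices are pairwise distinct and the edges pairwise distinct.\<close>
definition directed_circuit ::
  "'d set \<Rightarrow> ('d \<Rightarrow> 'd) \<Rightarrow> ('d \<Rightarrow> 'd) \<Rightarrow> ('d \<Rightarrow> nat) \<Rightarrow> 'd list \<Rightarrow> bool" where
  "directed_circuit D \<alpha> \<sigma> w hs \<longleftrightarrow>
     hs \<noteq> [] \<and> set hs \<subseteq> D \<and>
     (\<forall>i<length hs. 0 < w (\<alpha> (hs ! i)) \<and>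
        orbit \<sigma> (hs ! ((i + 1) mod length hs)) = orbit \<sigma> (\<alpha> (hs ! i))) \<and>
     (\<forall>i<length hs. \<forall>j<length hs. i \<noteq> j \<longrightarrow>
        orbit \<sigma> (hs ! i) \<noteq> orbit \<sigma> (hs ! j) \<and> hs ! j \<noteq> \<alpha> (hs ! i))"

text \<open>Darts lying on the right side of a simple cycle whose set of darts is C:
start from the faces on the right of the cycle darts, close under walking along
faces and under crossing edges that are not edges of the cycle.\<close>
inductive_set right_side ::
  "('d \<Rightarrow> 'd) \<Rightarrow> ('d \<Rightarrow> 'd) \<Rightarrow> 'd set \<Rightarrow> 'd set" for \<alpha> \<sigma> C where
  base: "h \<in> C \<Longrightarrow> h \<in> right_side \<alpha> \<sigma> C"
| face: "g \<in> right_side \<alpha> \<sigma> C \<Longrightarrow> \<sigma> (\<alpha> g) \<in> right_side \<alpha> \<sigma> C"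
| cross: "g \<in> right_side \<alpha> \<sigma> C \<Longrightarrow> g \<notin> C \<Longrightarrow> \<alpha> g \<notin> C \<Longrightarrow> \<alpha> g \<in> right_side \<alpha> \<sigma> C"

definition ccw_circuit ::
  "'d set \<Rightarrow> ('d \<Rightarrow> 'd) \<Rightarrow> ('d \<Rightarrow> 'd) \<Rightarrow> 'd set \<Rightarrow> ('d \<Rightarrow> nat) \<Rightarrow> 'd list \<Rightarrow> bool" where
  "ccw_circuit D \<alpha> \<sigma> r w hs \<longleftrightarrow>
     directed_circuit D \<alpha> \<sigma> w hs \<and> r \<inter> right_side \<alpha> \<sigma> (set hs) \<noteq> {}"

definition minimal_orientation ::
  "'d set \<Rightarrow> ('d \<Rightarrow> 'd) \<Rightarrow> ('d \<Rightarrow> 'd) \<Rightarrow> 'd set \<Rightarrow> ('d \<Rightarrow> nat) \<Rightarrow> bool" where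
  "minimal_orientation D \<alpha> \<sigma> r w \<longleftrightarrow> \<not> (\<exists>hs. ccw_circuit D \<alpha> \<sigma> r w hs)"

text \<open>A mobile: darts D (including buds B), sigma the rotation around vertices
(vertices = sigma-orbits), alpha a fixed-point-free involution on the non-bud darts
D - B (edges), black : vertex colouring (True = black).  The underlying plane
tree: connected and #vertices = #edges + 1. Buds only at black vertices.
w gives weights to the non-bud half-edges.\<close>

definition mob_conn :: "'d set \<Rightarrow> 'd set \<Rightarrow> ('d \<Rightarrow> 'd) \<Rightarrow> ('d \<Rightarrow> 'd) \<Rightarrow> ('d \<times> 'd) set" where
  "mob_conn D B \<alpha> \<sigma> = {(x, y). x \<in> D \<and> y \<in> D \<and> (y = \<sigma> x \<or> (x \<notin> B \<and> y = \<alpha> x))}"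

definition mobile ::
  "'d set \<Rightarrow> 'd set \<Rightarrow> ('d \<Rightarrow> 'd) \<Rightarrow> ('d \<Rightarrow> 'd) \<Rightarrow> ('d set \<Rightarrow> bool) \<Rightarrow> bool" where
  "mobile D B \<alpha> \<sigma> black \<longleftrightarrow>
     finite D \<and> D \<noteq> {} \<and> B \<subseteq> D \<and>
     \<alpha> permutes (D - B) \<and> (\<forall>h\<in>D - B. \<alpha> (\<alpha> h) = h \<and> \<alpha> h \<noteq> h) \<and>
     \<sigma> permutes D \<and>
     (\<forall>x\<in>D. \<forall>y\<in>D. (x, y) \<in> (mob_conn D B \<alpha> \<sigma>)\<^sup>*) \<and>
     card (verts D \<sigma>) = card (edges (D - B) \<alpha>) + 1 \<and>
     (\<forall>h\<in>B. black (orbit \<sigma> h))"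

definition N_mobile ::
  "'d set \<Rightarrow> 'd set \<Rightarrow> ('d \<Rightarrow> 'd) \<Rightarrow> ('d \<Rightarrow> 'd) \<Rightarrow> ('d set \<Rightarrow> bool) \<Rightarrow> ('d \<Rightarrow> nat) \<Rightarrow> bool" where
  "N_mobile D B \<alpha> \<sigma> black w \<longleftrightarrow>
     mobile D B \<alpha> \<sigma> black \<and>
     (\<forall>h\<in>D - B. if black (orbit \<sigma> h) then w h = 0 else 0 < w h)"

definition branching_mobile ::
  "nat \<Rightarrow> 'd set \<Rightarrow> 'd set \<Rightarrow> ('d \<Rightarrow> 'd) \<Rightarrow> ('d \<Rightarrow> 'd) \<Rightarrow> ('d set \<Rightarrow> bool) \<Rightarrow> ('d \<Rightarrow> nat) \<Rightarrow> bool" where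
  "branching_mobile d D B \<alpha> \<sigma> black w \<longleftrightarrow>
     N_mobile D B \<alpha> \<sigma> black w \<and>
     (\<forall>v\<in>verts D \<sigma>. if black v then card v = d else (\<Sum>h\<in>v - B. w h) = d) \<and>
     (\<forall>h\<in>D - B. w h + w (\<alpha> h) = d - 2)"

end

theory Submission
  imports Defs
begin


lemma orb_self: "\<sigma> permutes D \<Longrightarrow> finite D \<Longrightarrow> x \<in> orbit \<sigma> x"
  by (meson permutation_permutes permutation_self_in_orbit)

lemma orb_eq: "\<sigma> permutes D \<Longrightarrow> finite D \<Longrightarrow> y \<in> orbit \<sigma> x \<Longrightarrow> orbit \<sigma> y = orbit \<sigma> x"
  by (meson cyclic_on_orbit orbit_cyclic_eq3)

lemma orb_eq2: "\<sigma> permutes D \<Longrightarrow> finite D \<Longrightarrow> y \<in> orbit \<sigma> x \<Longrightarrow> orbit \<sigma> x = orbit \<sigma> y"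
  using orb_eq by metis

lemma orb_step: "\<sigma> permutes D \<Longrightarrow> finite D \<Longrightarrow> orbit \<sigma> (\<sigma> x) = orbit \<sigma> x"
  by (meson permutation_orbit_step permutation_permutes)

lemma orb_sub: "\<sigma> permutes D \<Longrightarrow> x \<in> D \<Longrightarrow> orbit \<sigma> x \<subseteq> D"
  by (rule permutes_orbit_subset)

lemma orb_meet: "\<sigma> permutes D \<Longrightarrow> finite D \<Longrightarrow> z \<in> orbit \<sigma> x \<Longrightarrow> z \<in> orbit \<sigma> y \<Longrightarrow> orbit \<sigma> x = orbit \<sigma> y"
  using orb_eq by metis

lemma orb_invol: assumes "\<alpha> (\<alpha> c) = c" shows "orbit \<alpha> c = {c, \<alpha> c}"
proof
  show "orbit \<alpha> c \<subseteq> {c, \<alpha> c}"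
  proof
    fix y assume "y \<in> orbit \<alpha> c" then show "y \<in> {c, \<alpha> c}"
      by induction (use assms in auto)
  qed
  show "{c, \<alpha> c} \<subseteq> orbit \<alpha> c"
    using orbit.base[of \<alpha> c] orbit.step[of "\<alpha> c" \<alpha> c] assms by auto
qed

lemma even_card_odd:
  fixes w :: "'x \<Rightarrow> nat"
  assumes "finite A" "even (sum w A)"
  shows "even (card {x\<in>A. odd (w x)})"
  using assms
proof (induction A rule: finite_induct)
  case empty then show ?case by simp
next
  case (insert a A)
  have e: "{x\<in>insert a A. odd (w x)} = (if odd (w a) then insert a {x\<in>A. odd (w x)} else {x\<in>A. odd (w x)})"
    by auto
  show ?case
  proof (cases "odd (w a)")
    case True
    then have "odd (sum w A)" using insert by simp
    then have "odd (card {x\<in>A. odd (w x)})"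
    proof -
      have "even (sum w A) \<longleftrightarrow> even (card {x\<in>A. odd (w x)})"
        using insert(1) proof (induction A rule: finite_induct)
        case (insert b C)
        have "{x\<in>insert b C. odd (w x)} = (if odd (w b) then insert b {x\<in>C. odd (w x)} else {x\<in>C. odd (w x)})" by auto
        then show ?case using insert by auto
      qed simp
      then show ?thesis using \<open>odd (sum w A)\<close> by simp
    qed
    then show ?thesis using True insert e by simp
  next
    case False
    then show ?thesis using insert e by simp
  qed
qed

lemma ak: fixes d N F E V W Vo Vi Oc Ic WO X :: int
  assumes "N = d*F" "N = 2*E" "V+F = E+2" "V = Vo + Vi" "W = Vo + d*Vi" "N = Oc + Ic"
    "2*W = Oc + (d-2)*Ic" "2*WO = Oc" "Vo = WO + X"
  shows "Oc + (d-1)*X = 2*d"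
  using assms by algebra

lemma orbit_sum:
  fixes g :: "'d \<Rightarrow> 'b::comm_monoid_add"
  assumes "f permutes D" "finite D"
  shows "sum g D = (\<Sum>q\<in>orbit f ` D. sum g q)"
proof -
  have U: "\<Union> (orbit f ` D) = D"
    using orb_sub[OF assms(1)] orb_self[OF assms] by blast
  have "sum g (\<Union> (orbit f ` D)) = (sum \<circ> sum) g (orbit f ` D)"
  proof (rule sum.Union_disjoint)
    show "\<forall>A\<in>orbit f ` D. finite A" using orb_sub[OF assms(1)] assms(2) finite_subset by blast
    show "\<forall>A\<in>orbit f ` D. \<forall>B\<in>orbit f ` D. A \<noteq> B \<longrightarrow> A \<inter> B = {}"
      using orb_meet[OF assms] by blast
  qed
  then show ?thesis using U by simp
qed

lemma circ_intro:
  fixes hs :: "'d list"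
  assumes ne: "hs \<noteq> []" and sD: "set hs \<subseteq> D"
    and pos: "\<forall>i<length hs. 0 < w (\<alpha> (hs ! i))"
    and adj: "\<forall>i<length hs. orbit \<sigma> (hs ! ((i + 1) mod length hs)) = orbit \<sigma> (\<alpha> (hs ! i))"
    and dist: "distinct (map (orbit \<sigma>) hs)"
    and two: "length hs = 2 \<longrightarrow> hs ! 1 \<noteq> \<alpha> (hs ! 0)"
    and ainv: "\<forall>h\<in>D. \<alpha> (\<alpha> h) = h"
  shows "directed_circuit D \<alpha> \<sigma> w hs"
  unfolding directed_circuit_def
proof (intro conjI ne sD pos adj allI impI)
  fix i j assume ij: "i < length hs" "j < length hs" "i \<noteq> j"
  define k where "k = length hs"
  define V where "V = orbit \<sigma>"
  have dv: "V (hs ! a) = V (hs ! b) \<Longrightarrow> a < k \<Longrightarrow> b < k \<Longrightarrow> a = b" for a b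
    using dist unfolding V_def k_def by (auto simp: distinct_conv_nth)
  show "orbit \<sigma> (hs ! i) \<noteq> orbit \<sigma> (hs ! j)" using dv ij unfolding V_def k_def by blast
  show "hs ! j \<noteq> \<alpha> (hs ! i)"
  proof
    assume e: "hs ! j = \<alpha> (hs ! i)"
    have kp: "0 < k" using ne by (simp add: k_def)
    have "V (hs ! j) = V (hs ! ((i + 1) mod k))" using adj ij e unfolding V_def k_def by simp
    then have j: "j = (i + 1) mod k" using dv ij kp unfolding k_def by simp
    have hiD: "hs ! i \<in> D" using sD ij by auto
    have e2: "\<alpha> (hs ! j) = hs ! i" using e ainv hiD by simp
    have "V (hs ! i) = V (hs ! ((j + 1) mod k))" using adj ij e2 unfolding V_def k_def by metis
    then have i: "i = (j + 1) mod k" using dv ij kp unfolding k_def by simp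
    show False
    proof (cases "k = 2")
      case True
      then have "(i = 0 \<and> j = 1) \<or> (i = 1 \<and> j = 0)" using ij k_def by auto
      then show False using two True e e2 k_def by auto
    next
      case False
      have "k \<noteq> 1" using ij k_def by auto
      with False have k3: "k \<ge> 3" using kp by auto
      have ik: "i < k" "j < k" using ij k_def by auto
      show False
      proof (cases "i + 1 < k")
        case True
        then have "j = i + 1" using j by simp
        then have ii: "i = (i + 2) mod k" using i by simp
        show False
        proof (cases "i + 2 < k")
          case True then show False using ii by simp
        next
          case False
          then have "i + 2 = k" using \<open>i + 1 < k\<close> by simp
          then show False using ii k3 by simp
        qed
      next
        case False
        then have "j = 0" using j ik using False by (cases "i + 1 = k") auto
        then show False using i k3 ik False by simp
      qed
    qed
  qed
qed (use pos adj in auto)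

lemma find_circuit:
  fixes S :: "'d set"
  assumes fin: "finite D" and sp: "\<sigma> permutes D"
    and ainv: "\<forall>h\<in>D. \<alpha> (\<alpha> h) = h"
    and SD: "S \<subseteq> D" and F1: "\<forall>h\<in>S. \<alpha> h \<in> S" and pos: "\<forall>h\<in>S. 0 < w h"
    and F3: "\<forall>h\<in>S. \<exists>g\<in>S. g \<in> orbit \<sigma> h \<and> g \<noteq> h" and Sne: "S \<noteq> {}"
  shows "\<exists>hs. directed_circuit D \<alpha> \<sigma> w hs \<and> set hs \<subseteq> S"
proof (cases "\<exists>h\<in>S. orbit \<sigma> (\<alpha> h) = orbit \<sigma> h")
  case True
  then obtain h where h: "h \<in> S" "orbit \<sigma> (\<alpha> h) = orbit \<sigma> h" by auto
  have "directed_circuit D \<alpha> \<sigma> w [h]"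
    by (rule circ_intro) (use h SD F1 pos ainv in auto)
  then show ?thesis using h by auto
next
  case False
  define V where "V = orbit \<sigma>"
  define P where "P p \<longleftrightarrow> p \<noteq> [] \<and> set p \<subseteq> S \<and>
      (\<forall>i. Suc i < length p \<longrightarrow> V (p ! Suc i) = V (\<alpha> (p ! i))) \<and>
      distinct (map V p @ [V (\<alpha> (last p))])" for p
  have VD: "V x \<in> V ` D" if "x \<in> D" for x using that by simp
  have aS: "\<alpha> x \<in> D" if "x \<in> S" for x using F1 SD that by auto
  have bound: "length p < card (V ` D)" if "P p" for p
  proof -
    have "last p \<in> S" using that last_in_set[of p] unfolding P_def by auto
    then have "set (map V p @ [V (\<alpha> (last p))]) \<subseteq> V ` D"
      using that SD aS unfolding P_def by auto
    then have "card (set (map V p @ [V (\<alpha> (last p))])) \<le> card (V ` D)"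
      using fin by (intro card_mono) auto
    then show ?thesis using that distinct_card unfolding P_def by (metis length_append_singleton
        length_map less_eq_Suc_le)
  qed
  obtain h0 where h0: "h0 \<in> S" using Sne by auto
  have "orbit \<sigma> (\<alpha> h0) \<noteq> orbit \<sigma> h0" using h0 False by blast
  then have P0: "P [h0]" using h0 unfolding P_def V_def by auto
  define L where "L = length ` {p. P p}"
  have "L \<subseteq> {..<card (V ` D)}" unfolding L_def using bound by auto
  then have finL: "finite L" using finite_subset by blast
  have "Max L \<in> L" using finL P0 unfolding L_def by (intro Max_in) auto
  then obtain p where p: "P p" "length p = Max L" unfolding L_def by auto
  have pmax: "length q \<le> length p" if "P q" for q
    using Max_ge[OF finL] that p unfolding L_def by auto
  define m where "m = length p"
  define lst where "lst = last p"
  have pne: "p \<noteq> []" and pS: "set p \<subseteq> S"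
    and pch: "\<And>i. Suc i < m \<Longrightarrow> V (p ! Suc i) = V (\<alpha> (p ! i))"
    and pdist: "distinct (map V p @ [V (\<alpha> lst)])"
    using p(1) unfolding P_def m_def lst_def by auto
  have m0: "0 < m" using pne m_def by simp
  have lst: "lst = p ! (m - 1)" using pne unfolding lst_def m_def by (simp add: last_conv_nth)
  have lstS: "lst \<in> S" using pS pne unfolding lst_def by auto
  obtain g where g: "g \<in> S" "g \<in> V (\<alpha> lst)" "g \<noteq> \<alpha> lst"
    using F3 F1 lstS unfolding V_def by blast
  have Vg: "V g = V (\<alpha> lst)" using g(2) orb_eq[OF sp fin] unfolding V_def by blast
  have nl: "V (\<alpha> g) \<noteq> V g" using False g(1) unfolding V_def by auto
  have "V (\<alpha> g) \<in> set (map V p @ [V (\<alpha> lst)])"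
  proof (rule ccontr)
    assume nin: "V (\<alpha> g) \<notin> set (map V p @ [V (\<alpha> lst)])"
    have "P (p @ [g])" unfolding P_def
    proof (intro conjI allI impI)
      show "p @ [g] \<noteq> []" by simp
      show "set (p @ [g]) \<subseteq> S" using pS g by auto
      fix i assume i: "Suc i < length (p @ [g])"
      show "V ((p @ [g]) ! Suc i) = V (\<alpha> ((p @ [g]) ! i))"
      proof (cases "Suc i < m")
        case True then show ?thesis using pch[OF True] by (simp add: nth_append m_def)
      next
        case False
        then have "Suc i = m" using i m_def by simp
        moreover then have "i = m - 1" by simp
        ultimately show ?thesis using Vg lst by (simp add: nth_append m_def)
      qed
    next
      have "map V (p @ [g]) @ [V (\<alpha> (last (p @ [g])))] = (map V p @ [V (\<alpha> lst)]) @ [V (\<alpha> g)]"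
        using Vg by simp
      then show "distinct (map V (p @ [g]) @ [V (\<alpha> (last (p @ [g])))])"
        using pdist nin by auto
    qed
    then show False using pmax by fastforce
  qed
  then have "V (\<alpha> g) \<in> set (map V p)" using nl Vg by auto
  then obtain j where j: "j < m" "V (p ! j) = V (\<alpha> g)" unfolding m_def
    by (metis in_set_conv_nth length_map nth_map)
  define c where "c = drop j p @ [g]"
  have lc: "length c = m - j + 1" unfolding c_def m_def by simp
  have cn: "c ! i = (if i < m - j then p ! (j + i) else g)" if "i < length c" for i
    using that unfolding c_def m_def by (auto simp: nth_append)
  have "directed_circuit D \<alpha> \<sigma> w c"
  proof (rule circ_intro)
    show "c \<noteq> []" by (simp add: c_def)
    have cS: "set c \<subseteq> S" using pS g unfolding c_def by (auto dest: in_set_dropD)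
    then show "set c \<subseteq> D" using SD by auto
    show "\<forall>i<length c. 0 < w (\<alpha> (c ! i))" using cS F1 pos by (auto dest!: nth_mem)
    show "\<forall>h\<in>D. \<alpha> (\<alpha> h) = h" by (rule ainv)
    have "map V c = drop j (map V p @ [V (\<alpha> lst)])" using j Vg unfolding c_def m_def by (simp add: drop_map)
    then have "distinct (map V c)" using pdist by (metis distinct_drop)
    then show "distinct (map (orbit \<sigma>) c)" unfolding V_def .
    show "length c = 2 \<longrightarrow> c ! 1 \<noteq> \<alpha> (c ! 0)"
    proof
      assume "length c = 2"
      then have "j = m - 1" using lc j by simp
      then show "c ! 1 \<noteq> \<alpha> (c ! 0)" using cn[of 0] cn[of 1] lc lst g(3) m0 by auto
    qed
    show "\<forall>i<length c. orbit \<sigma> (c ! ((i + 1) mod length c)) = orbit \<sigma> (\<alpha> (c ! i))"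
    proof (intro allI impI)
      fix i assume i: "i < length c"
      show "orbit \<sigma> (c ! ((i + 1) mod length c)) = orbit \<sigma> (\<alpha> (c ! i))"
      proof (cases "i + 1 < length c")
        case True
        show ?thesis
        proof (cases "i + 1 < m - j")
          case True2: True
          have "V (p ! Suc (j + i)) = V (\<alpha> (p ! (j + i)))" using pch True2 by simp
          then show ?thesis using cn[of i] cn[of "i+1"] True True2 unfolding V_def by simp
        next
          case False2: False
          then have "i + 1 = m - j" using True lc by simp
          then have "j + i = m - 1" using j by simp
          then show ?thesis using cn[of i] cn[of "i+1"] True Vg lst \<open>i + 1 = m - j\<close> unfolding V_def by simp
        qed
      next
        case False
        then have "i = m - j" using i lc by simp
        then show ?thesis using cn[of i] cn[of 0] lc j i unfolding V_def by simp
      qed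
    qed
  qed
  moreover have "set c \<subseteq> S" using pS g unfolding c_def by (auto dest: in_set_dropD)
  ultimately show ?thesis by blast
qed
lemma circ_rev:
  assumes dc: "directed_circuit D \<alpha> \<sigma> w hs"
    and posh: "\<forall>h\<in>set hs. 0 < w h"
    and ainv: "\<forall>h\<in>D. \<alpha> (\<alpha> h) = h" and aD: "\<forall>h\<in>D. \<alpha> h \<in> D"
  shows "directed_circuit D \<alpha> \<sigma> w (rev (map \<alpha> hs))"
proof -
  define k where "k = length hs"
  have ne: "hs \<noteq> []" and sD: "set hs \<subseteq> D"
    and adj: "\<And>i. i < k \<Longrightarrow> orbit \<sigma> (hs ! ((i + 1) mod k)) = orbit \<sigma> (\<alpha> (hs ! i))"
    and dst: "\<And>i j. i < k \<Longrightarrow> j < k \<Longrightarrow> i \<noteq> j \<Longrightarrow> orbit \<sigma> (hs ! i) \<noteq> orbit \<sigma> (hs ! j) \<and> hs ! j \<noteq> \<alpha> (hs ! i)"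
    using dc unfolding directed_circuit_def k_def by auto
  define rs where "rs = rev (map \<alpha> hs)"
  have lr: "length rs = k" by (simp add: rs_def k_def)
  have rn: "rs ! i = \<alpha> (hs ! (k - 1 - i))" if "i < k" for i
    using that by (simp add: rs_def k_def rev_nth)
  have hD: "hs ! i \<in> D" if "i < k" for i using sD that k_def by auto
  have kp: "0 < k" using ne k_def by simp
  show ?thesis unfolding rs_def[symmetric]
  proof (rule circ_intro)
    show "rs \<noteq> []" using ne by (simp add: rs_def)
    show "set rs \<subseteq> D" using sD aD by (auto simp: rs_def)
    show "\<forall>h\<in>D. \<alpha> (\<alpha> h) = h" by (rule ainv)
    show "\<forall>i<length rs. 0 < w (\<alpha> (rs ! i))"
      using posh rn hD ainv lr k_def by (auto simp: nth_mem)
    show "\<forall>i<length rs. orbit \<sigma> (rs ! ((i + 1) mod length rs)) = orbit \<sigma> (\<alpha> (rs ! i))"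
    proof (intro allI impI)
      fix i assume i: "i < length rs"
      show "orbit \<sigma> (rs ! ((i + 1) mod length rs)) = orbit \<sigma> (\<alpha> (rs ! i))"
      proof (cases "i + 1 < k")
        case True
        have a: "orbit \<sigma> (hs ! ((k - 2 - i + 1) mod k)) = orbit \<sigma> (\<alpha> (hs ! (k - 2 - i)))"
          using adj[of "k - 2 - i"] True by simp
        have "k - 2 - i + 1 = k - 1 - i" using True by simp
        then show ?thesis using a True rn[of i] rn[of "i+1"] lr i ainv hD[of "k - 1 - i"]
          by (simp add: numeral_2_eq_2)
      next
        case False
        then have ii: "i = k - 1" using i lr by simp
        have a: "orbit \<sigma> (hs ! 0) = orbit \<sigma> (\<alpha> (hs ! (k - 1)))"
          using adj[of "k - 1"] kp by simp
        then show ?thesis using ii rn[of 0] rn[of "k - 1"] lr kp ainv hD[of 0] by simp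
      qed
    qed
    have m1: "map (orbit \<sigma> \<circ> \<alpha>) hs = rotate1 (map (orbit \<sigma>) hs)"
    proof (rule nth_equalityI)
      fix i assume "i < length (map (orbit \<sigma> \<circ> \<alpha>) hs)"
      then have "i < k" by (simp add: k_def)
      then show "map (orbit \<sigma> \<circ> \<alpha>) hs ! i = rotate1 (map (orbit \<sigma>) hs) ! i"
        using adj[of i] kp by (simp add: nth_rotate1 k_def)
    qed simp
    have "distinct (map (orbit \<sigma>) hs)"
      using dst unfolding distinct_conv_nth k_def by auto
    then have "distinct (map (orbit \<sigma> \<circ> \<alpha>) hs)" using m1 by simp
    then show "distinct (map (orbit \<sigma>) rs)" by (simp add: rs_def rev_map[symmetric])
    show "length rs = 2 \<longrightarrow> rs ! 1 \<noteq> \<alpha> (rs ! 0)"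
    proof
      assume "length rs = 2"
      then have k2: "k = 2" using lr by simp
      have "hs ! 1 \<noteq> \<alpha> (hs ! 0)" using dst[of 0 1] k2 by simp
      then show "rs ! 1 \<noteq> \<alpha> (rs ! 0)" using rn[of 0] rn[of 1] k2 ainv hD[of 1] by auto
    qed
  qed
qed

lemma rs_cover:
  assumes fin: "finite D" and ainv: "\<forall>h\<in>D. \<alpha> (\<alpha> h) = h" and aD: "\<forall>h\<in>D. \<alpha> h \<in> D"
    and CD: "C \<subseteq> D" and c0: "c0 \<in> C"
    and conn: "\<forall>x\<in>D. \<forall>y\<in>D. (x, y) \<in> (map_conn D \<alpha> \<sigma>)\<^sup>*"
    and y: "y \<in> D"
  shows "y \<in> right_side \<alpha> \<sigma> C \<union> right_side \<alpha> \<sigma> (\<alpha> ` C)"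
proof -
  define T where "T = right_side \<alpha> \<sigma> C \<union> right_side \<alpha> \<sigma> (\<alpha> ` C)"
  have acl: "\<alpha> x \<in> T" if "x \<in> T" "x \<in> D" for x
  proof -
    from that(1)[unfolded T_def] show ?thesis
    proof
      assume x: "x \<in> right_side \<alpha> \<sigma> C"
      show ?thesis
      proof (cases "x \<in> C \<or> \<alpha> x \<in> C")
        case True then show ?thesis by (auto simp: T_def intro: right_side.base)
      next
        case False then show ?thesis using x by (auto simp: T_def intro: right_side.cross)
      qed
    next
      assume x: "x \<in> right_side \<alpha> \<sigma> (\<alpha> ` C)"
      show ?thesis
      proof (cases "x \<in> \<alpha> ` C \<or> \<alpha> x \<in> \<alpha> ` C")
        case True
        then show ?thesis
        proof
          assume "x \<in> \<alpha> ` C"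
          then obtain c where "c \<in> C" "x = \<alpha> c" by auto
          then have "\<alpha> x = c" using ainv CD by auto
          then show ?thesis using \<open>c \<in> C\<close> by (auto simp: T_def intro: right_side.base)
        next
          assume "\<alpha> x \<in> \<alpha> ` C" then show ?thesis by (auto simp: T_def intro: right_side.base)
        qed
      next
        case False then show ?thesis using x by (auto simp: T_def intro: right_side.cross)
      qed
    qed
  qed
  have "(c0, y) \<in> (map_conn D \<alpha> \<sigma>)\<^sup>*" using conn c0 CD y by auto
  then have "y \<in> T \<and> y \<in> D"
  proof (induction rule: rtrancl_induct)
    case base then show ?case using c0 CD by (auto simp: T_def intro: right_side.base)
  next
    case (step x z)
    then have xz: "x \<in> D" "z \<in> D" "z = \<alpha> x \<or> z = \<sigma> x" by (auto simp: map_conn_def)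
    from xz(3) show ?case
    proof
      assume "z = \<alpha> x" then show ?thesis using acl step xz by auto
    next
      assume z: "z = \<sigma> x"
      have ax: "\<alpha> x \<in> T" using acl step xz by auto
      have "\<sigma> (\<alpha> (\<alpha> x)) \<in> T" using ax unfolding T_def by (auto intro: right_side.face)
      then show ?thesis using z ainv xz by auto
    qed
  qed
  then show ?thesis unfolding T_def by simp
qed

lemma part1:
  fixes w :: "'d \<Rightarrow> nat"
  assumes ev: "even d" and d4: "d \<ge> 4" and bm: "branching_mobile d D B \<alpha> \<sigma> black w"
  shows "{h \<in> D - B. odd (w h)} = {}"
proof (rule ccontr)
  define S where "S = {h \<in> D - B. odd (w h)}"
  assume "{h \<in> D - B. odd (w h)} \<noteq> {}"
  then have Sne: "S \<noteq> {}" by (simp add: S_def)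
  have fin: "finite D" and Dne: "D \<noteq> {}" and BD: "B \<subseteq> D" and ap: "\<alpha> permutes (D - B)"
    and ainv: "\<And>h. h \<in> D - B \<Longrightarrow> \<alpha> (\<alpha> h) = h" and sp: "\<sigma> permutes D"
    and conn: "\<And>x y. x \<in> D \<Longrightarrow> y \<in> D \<Longrightarrow> (x, y) \<in> (mob_conn D B \<alpha> \<sigma>)\<^sup>*"
    and cardVE: "card (verts D \<sigma>) = card (edges (D - B) \<alpha>) + 1"
    and budblack: "\<And>h. h \<in> B \<Longrightarrow> black (orbit \<sigma> h)"
    and wcol: "\<And>h. h \<in> D - B \<Longrightarrow> (if black (orbit \<sigma> h) then w h = 0 else 0 < w h)"
    and vw: "\<And>v. v \<in> verts D \<sigma> \<Longrightarrow> (if black v then card v = d else (\<Sum>h\<in>v - B. w h) = d)"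
    and ew: "\<And>h. h \<in> D - B \<Longrightarrow> w h + w (\<alpha> h) = d - 2"
    using bm unfolding branching_mobile_def N_mobile_def mobile_def by blast+
  have aD: "\<And>h. h \<in> D - B \<Longrightarrow> \<alpha> h \<in> D - B" using permutes_in_image[OF ap] by blast
  have SD: "S \<subseteq> D - B" by (auto simp: S_def)
  have F1: "\<alpha> h \<in> S" if "h \<in> S" for h
  proof -
    have "h \<in> D - B" "odd (w h)" using that by (auto simp: S_def)
    moreover have "even (d - 2)" using ev d4 by auto
    ultimately have "even (w h + w (\<alpha> h))" using ew[of h] by simp
    then have "odd (w (\<alpha> h))" using \<open>odd (w h)\<close> by simp
    then show ?thesis using aD[of h] \<open>h \<in> D - B\<close> by (auto simp: S_def)
  qed
  have F2: "\<not> black (orbit \<sigma> h)" if "h \<in> S" for h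
    using wcol[of h] that by (auto simp: S_def split: if_splits)
  have F3: "\<exists>g\<in>S. g \<in> orbit \<sigma> h \<and> g \<noteq> h" if hS: "h \<in> S" for h
  proof -
    have hD: "h \<in> D" using hS SD by auto
    have vv: "orbit \<sigma> h \<in> verts D \<sigma>" using hD by (auto simp: verts_def)
    have nb: "orbit \<sigma> h \<inter> B = {}"
    proof (rule ccontr)
      assume "orbit \<sigma> h \<inter> B \<noteq> {}"
      then obtain b where "b \<in> orbit \<sigma> h" "b \<in> B" by auto
      then have "orbit \<sigma> b = orbit \<sigma> h" using orb_eq[OF sp fin] by blast
      then show False using budblack[OF \<open>b \<in> B\<close>] F2[OF hS] by simp
    qed
    have sw: "(\<Sum>x\<in>orbit \<sigma> h. w x) = d" using vw[OF vv] F2[OF hS] nb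
      by (simp add: Diff_triv)
    have finv: "finite (orbit \<sigma> h)" using orb_sub[OF sp hD] fin finite_subset by blast
    have ec: "even (card {x \<in> orbit \<sigma> h. odd (w x)})"
      using even_card_odd[OF finv] sw ev by simp
    have eqs: "{x \<in> orbit \<sigma> h. odd (w x)} = S \<inter> orbit \<sigma> h"
      using orb_sub[OF sp hD] nb by (auto simp: S_def)
    have hin: "h \<in> S \<inter> orbit \<sigma> h" using hS orb_self[OF sp fin] by auto
    have finS: "finite (S \<inter> orbit \<sigma> h)" using finv by auto
    have "card (S \<inter> orbit \<sigma> h) \<noteq> 1"
      using ec eqs by auto
    moreover have "card (S \<inter> orbit \<sigma> h) \<noteq> 0" using hin finS by auto
    ultimately have "\<not> (S \<inter> orbit \<sigma> h) \<subseteq> {h}"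
    proof (intro notI)
      assume "card (S \<inter> orbit \<sigma> h) \<noteq> 1" "S \<inter> orbit \<sigma> h \<subseteq> {h}"
      then have "S \<inter> orbit \<sigma> h = {h}" using hin by auto
      then show False using \<open>card (S \<inter> orbit \<sigma> h) \<noteq> 1\<close> by simp
    qed
    then show ?thesis by auto
  qed
  obtain x0 where x0: "x0 \<in> D" using Dne by auto
  define v0 where "v0 = orbit \<sigma> x0"
  define Q where "Q = {(orbit \<sigma> h, orbit \<sigma> (\<alpha> h)) | h. h \<in> D - B}"
  have reach: "(v0, orbit \<sigma> y) \<in> Q\<^sup>*" if "y \<in> D" for y
  proof -
    have "(x0, y) \<in> (mob_conn D B \<alpha> \<sigma>)\<^sup>*" using conn x0 that by blast
    then show ?thesis
    proof (induction rule: rtrancl_induct)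
      case base then show ?case by (simp add: v0_def)
    next
      case (step y z)
      then have yz: "y \<in> D" "z = \<sigma> y \<or> (y \<notin> B \<and> z = \<alpha> y)" by (auto simp: mob_conn_def)
      from yz(2) show ?case
      proof
        assume "z = \<sigma> y" then show ?thesis using step orb_step[OF sp fin] by simp
      next
        assume "y \<notin> B \<and> z = \<alpha> y"
        then have "(orbit \<sigma> y, orbit \<sigma> z) \<in> Q" using yz by (auto simp: Q_def)
        then show ?thesis using step by (meson rtrancl.rtrancl_into_rtrancl)
      qed
    qed
  qed
  define dist where "dist u = (LEAST n. (v0, u) \<in> Q ^^ n)" for u
  have dist_le: "dist u \<le> n" if "(v0, u) \<in> Q ^^ n" for u n
    using that unfolding dist_def by (rule Least_le)
  have par_ex: "\<exists>c. c \<in> u \<and> c \<in> D - B \<and> dist (orbit \<sigma> (\<alpha> c)) < dist u"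
    if uv: "u \<in> verts D \<sigma>" "u \<noteq> v0" for u
  proof -
    obtain y where y: "y \<in> D" "u = orbit \<sigma> y" using uv by (auto simp: verts_def)
    have "\<exists>n. (v0, u) \<in> Q ^^ n" using reach[OF y(1)] y(2) by (simp add: rtrancl_power)
    then have un: "(v0, u) \<in> Q ^^ dist u" unfolding dist_def by (rule LeastI_ex)
    then obtain m where m: "dist u = Suc m" using uv(2)
      by (cases "dist u") auto
    with un obtain u' where u': "(v0, u') \<in> Q ^^ m" "(u', u) \<in> Q"
      by (auto elim: relpow_Suc_E)
    then obtain h where h: "h \<in> D - B" "u' = orbit \<sigma> h" "u = orbit \<sigma> (\<alpha> h)"
      by (auto simp: Q_def)
    show ?thesis
    proof (intro exI conjI)
      show "\<alpha> h \<in> u" using h orb_self[OF sp fin] by simp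
      show "\<alpha> h \<in> D - B" using aD h by simp
      show "dist (orbit \<sigma> (\<alpha> (\<alpha> h))) < dist u" using ainv[OF h(1)] dist_le[OF u'(1)] h m by simp
    qed
  qed
  define par where "par u = (SOME c. c \<in> u \<and> c \<in> D - B \<and> dist (orbit \<sigma> (\<alpha> c)) < dist u)" for u
  have par: "par u \<in> u" "par u \<in> D - B" "dist (orbit \<sigma> (\<alpha> (par u))) < dist u"
    if "u \<in> verts D \<sigma>" "u \<noteq> v0" for u
    using someI_ex[OF par_ex[OF that]] unfolding par_def by blast+
  have vorb: "orbit \<sigma> c = u" if "u \<in> verts D \<sigma>" "c \<in> u" for u c
    using that orb_eq[OF sp fin] by (auto simp: verts_def)
  define Dom where "Dom = verts D \<sigma> - {v0}"
  define pe where "pe u = orbit \<alpha> (par u)" for u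
  have pe_eq: "pe u = {par u, \<alpha> (par u)}" if "u \<in> Dom" for u
    using orb_invol[of \<alpha>] ainv par(2) that by (auto simp: pe_def Dom_def)
  have inj: "inj_on pe Dom"
  proof (rule inj_onI)
    fix u u' assume uu: "u \<in> Dom" "u' \<in> Dom" "pe u = pe u'"
    have pu: "par u \<in> u" "par u \<in> D - B" "dist (orbit \<sigma> (\<alpha> (par u))) < dist u"
      and pu': "par u' \<in> u'" "par u' \<in> D - B" "dist (orbit \<sigma> (\<alpha> (par u'))) < dist u'"
      using par uu by (auto simp: Dom_def)
    have vu: "u \<in> verts D \<sigma>" "u' \<in> verts D \<sigma>" using uu by (auto simp: Dom_def)
    have "par u \<in> pe u'" using uu pe_eq by auto
    then have "par u = par u' \<or> par u = \<alpha> (par u')" using pe_eq uu by auto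
    then show "u = u'"
    proof
      assume "par u = par u'" then show ?thesis using vorb vu pu pu' by metis
    next
      assume a: "par u = \<alpha> (par u')"
      then have b: "par u' = \<alpha> (par u)" using ainv pu' by simp
      have "orbit \<sigma> (\<alpha> (par u)) = u'" using b vorb vu pu' by metis
      moreover have "orbit \<sigma> (\<alpha> (par u')) = u" using a vorb vu pu by metis
      ultimately show ?thesis using pu(3) pu'(3) by simp
    qed
  qed
  have finV: "finite (verts D \<sigma>)" using fin by (simp add: verts_def)
  have finE: "finite (edges (D - B) \<alpha>)" using fin by (simp add: edges_def)
  have peE: "pe ` Dom \<subseteq> edges (D - B) \<alpha>"
    using par by (auto simp: pe_def edges_def Dom_def)
  have finVS: "finite (dist ` (\<lambda>h. orbit \<sigma> h) ` S)" using fin SD finite_subset by blast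
  have "Max (dist ` (\<lambda>h. orbit \<sigma> h) ` S) \<in> dist ` (\<lambda>h. orbit \<sigma> h) ` S"
    using Max_in[OF finVS] Sne by auto
  then obtain g1 where g1: "g1 \<in> S" "dist (orbit \<sigma> g1) = Max (dist ` (\<lambda>h. orbit \<sigma> h) ` S)"
    by (metis (no_types, lifting) image_iff)
  define v where "v = orbit \<sigma> g1"
  have vmax: "dist (orbit \<sigma> g) \<le> dist v" if "g \<in> S" for g
    using Max_ge[OF finVS] that g1 v_def by auto
  have vV: "v \<in> verts D \<sigma>" using g1 SD by (auto simp: v_def verts_def)
  have g1v: "g1 \<in> v" using orb_self[OF sp fin] v_def by simp
  have Sv: "orbit \<sigma> g = v" if "g \<in> S" "g \<in> v" for g using vorb vV that by simp
  have "\<exists>e\<in>edges (D - B) \<alpha>. e \<notin> pe ` Dom"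
  proof (cases "\<exists>g\<in>S. g \<in> v \<and> \<alpha> g \<in> v")
    case True
    then obtain g where g: "g \<in> S" "g \<in> v" "\<alpha> g \<in> v" by auto
    have gD: "g \<in> D - B" using g SD by auto
    have "orbit \<alpha> g \<notin> pe ` Dom"
    proof
      assume "orbit \<alpha> g \<in> pe ` Dom"
      then obtain u where u: "u \<in> Dom" "pe u = orbit \<alpha> g" by auto
      have eq: "{par u, \<alpha> (par u)} = {g, \<alpha> g}" using pe_eq[OF u(1)] u(2) orb_invol[of \<alpha> g] ainv[OF gD] by simp
      have uV: "u \<in> verts D \<sigma>" "u \<noteq> v0" using u by (auto simp: Dom_def)
      have pin: "par u \<in> v" "\<alpha> (par u) \<in> v" using eq g by (auto simp: doubleton_eq_iff)
      have "u = v" using vorb[OF uV(1) par(1)[OF uV]] vorb[OF vV pin(1)] by simp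
      then show False using par(3)[OF uV] vorb[OF vV pin(2)] by simp
    qed
    then show ?thesis using gD by (auto simp: edges_def)
  next
    case False
    obtain g2 where g2: "g2 \<in> S" "g2 \<in> v" "g2 \<noteq> g1" using F3[OF g1(1)] v_def by auto
    have claim: "u = v \<and> par u = g" if "g \<in> S" "g \<in> v" "u \<in> Dom" "pe u = orbit \<alpha> g" for g u
    proof -
      have gD: "g \<in> D - B" using that SD by auto
      have eq: "{par u, \<alpha> (par u)} = {g, \<alpha> g}" using pe_eq[OF that(3)] that(4) orb_invol[of \<alpha> g] ainv[OF gD] by simp
      have uV: "u \<in> verts D \<sigma>" "u \<noteq> v0" using that by (auto simp: Dom_def)
      have "par u = g \<or> par u = \<alpha> g" using eq by (auto simp: doubleton_eq_iff)
      then show ?thesis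
      proof
        assume "par u = g" then show ?thesis using vorb[OF uV(1) par(1)[OF uV]] Sv that by simp
      next
        assume pa: "par u = \<alpha> g"
        have "\<alpha> g \<in> S" using F1 that by simp
        have "orbit \<sigma> (\<alpha> g) = u" using vorb[OF uV(1) par(1)[OF uV]] pa by simp
        then have "dist u \<le> dist v" using vmax[OF \<open>\<alpha> g \<in> S\<close>] by simp
        moreover have "dist (orbit \<sigma> (\<alpha> (par u))) = dist v" using pa ainv[OF gD] Sv that by simp
        ultimately show ?thesis using par(3)[OF uV] by simp
      qed
    qed
    have ne: "orbit \<alpha> g1 \<noteq> orbit \<alpha> g2"
    proof
      assume "orbit \<alpha> g1 = orbit \<alpha> g2"
      moreover have "g2 \<in> orbit \<alpha> g2" using orb_invol[of \<alpha> g2] ainv[of g2] SD g2 by auto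
      moreover have "orbit \<alpha> g1 = {g1, \<alpha> g1}" using orb_invol[of \<alpha> g1] ainv[of g1] SD g1 by auto
      ultimately have "g2 \<in> {g1, \<alpha> g1}" by simp
      then show False using False g2 g1 g1v by auto
    qed
    show ?thesis
    proof (rule ccontr)
      assume "\<not> ?thesis"
      moreover have "orbit \<alpha> g1 \<in> edges (D - B) \<alpha>" "orbit \<alpha> g2 \<in> edges (D - B) \<alpha>"
        using g1 g2 SD by (auto simp: edges_def)
      ultimately obtain u1 u2 where "u1 \<in> Dom" "pe u1 = orbit \<alpha> g1" "u2 \<in> Dom" "pe u2 = orbit \<alpha> g2"
        by (metis imageE)
      then show False using claim[OF g1(1) g1v] claim[OF g2(1) g2(2)] ne by metis
    qed
  qed
  then obtain e where e: "e \<in> edges (D - B) \<alpha>" "e \<notin> pe ` Dom" by auto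
  have "card Dom \<le> card (edges (D - B) \<alpha> - {e})"
  proof -
    have "pe ` Dom \<subseteq> edges (D - B) \<alpha> - {e}" using peE e by auto
    then have "card (pe ` Dom) \<le> card (edges (D - B) \<alpha> - {e})" using finE by (intro card_mono) auto
    then show ?thesis using card_image[OF inj] by simp
  qed
  moreover have "card Dom = card (verts D \<sigma>) - 1"
    using x0 finV by (auto simp: Dom_def v0_def verts_def)
  moreover have "card (edges (D - B) \<alpha> - {e}) = card (edges (D - B) \<alpha>) - 1"
    using e finE by simp
  moreover have "card (edges (D - B) \<alpha>) \<ge> 1" using e finE by (metis One_nat_def Suc_leI card_gt_0_iff empty_iff)
  ultimately show False using cardVE by simp
qed

lemma part2:
  fixes w :: "'d \<Rightarrow> nat"
  assumes ev: "even d" and d4: "d \<ge> 4" and rd: "rooted_dangulation d D \<alpha> \<sigma> r"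
    and dd: "dd2_orientation d D \<alpha> \<sigma> r w" and mn: "minimal_orientation D \<alpha> \<sigma> r w"
  shows "{h \<in> D. \<not> outer_dart \<alpha> r h \<and> odd (w h)} = {}"
proof (rule ccontr)
  define S where "S = {h \<in> D. \<not> outer_dart \<alpha> r h \<and> odd (w h)}"
  assume "{h \<in> D. \<not> outer_dart \<alpha> r h \<and> odd (w h)} \<noteq> {}"
  then have Sne: "S \<noteq> {}" by (simp add: S_def)
  have fin: "finite D" and ap: "\<alpha> permutes D"
    and ainv: "\<forall>h\<in>D. \<alpha> (\<alpha> h) = h" and anf: "\<And>h. h \<in> D \<Longrightarrow> \<alpha> h \<noteq> h" and sp: "\<sigma> permutes D"
    and conn: "\<forall>x\<in>D. \<forall>y\<in>D. (x, y) \<in> (map_conn D \<alpha> \<sigma>)\<^sup>*"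
    and euler: "card (verts D \<sigma>) + card (faces D \<alpha> \<sigma>) = card (edges D \<alpha>) + 2"
    and fcard: "\<And>f. f \<in> faces D \<alpha> \<sigma> \<Longrightarrow> card f = d" and rF: "r \<in> faces D \<alpha> \<sigma>"
    and ew: "\<And>h. h \<in> D \<Longrightarrow> w h + w (\<alpha> h) = (if outer_dart \<alpha> r h then 1 else d - 2)"
    and vw: "\<And>v. v \<in> verts D \<sigma> \<Longrightarrow> (\<Sum>h\<in>v. w h) = (if outer_vertex r v then 1 else d)"
    using rd dd unfolding rooted_dangulation_def planar_map_def dd2_orientation_def by blast+
  have aD: "\<forall>h\<in>D. \<alpha> h \<in> D" using permutes_in_image[OF ap] by blast
  have phip: "(\<sigma> \<circ> \<alpha>) permutes D" using permutes_compose[OF ap sp] .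
  have oa: "orbit \<alpha> h = {h, \<alpha> h}" if "h \<in> D" for h using orb_invol ainv that by metis
  have oinv: "outer_dart \<alpha> r (\<alpha> h) \<longleftrightarrow> outer_dart \<alpha> r h" if "h \<in> D" for h
    using oa[OF that] oa[of "\<alpha> h"] aD ainv that unfolding outer_dart_def by (simp add: insert_commute)
  obtain x0 where x0: "x0 \<in> D" "r = orbit (\<sigma> \<circ> \<alpha>) x0" using rF by (auto simp: faces_def)
  have rD: "r \<subseteq> D" using orb_sub[OF phip x0(1)] x0 by simp
  have OV: "outer_vertex r (orbit \<sigma> h)" if "h \<in> D" "outer_dart \<alpha> r h" for h
  proof -
    have "h \<in> r \<or> \<alpha> h \<in> r" using that oa unfolding outer_dart_def by auto
    then show ?thesis
    proof
      assume "h \<in> r" then show ?thesis using orb_self[OF sp fin] unfolding outer_vertex_def by blast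
    next
      assume "\<alpha> h \<in> r"
      then have "(\<sigma> \<circ> \<alpha>) (\<alpha> h) \<in> r" using x0(2) orbit.step by metis
      then have "\<sigma> h \<in> r" using ainv that by simp
      moreover have "\<sigma> h \<in> orbit \<sigma> h" by (rule orbit.base)
      ultimately show ?thesis unfolding outer_vertex_def by blast
    qed
  qed
  define V where "V = verts D \<sigma>"
  define F where "F = faces D \<alpha> \<sigma>"
  define E where "E = edges D \<alpha>"
  define Od where "Od = {h \<in> D. outer_dart \<alpha> r h}"
  define Vout where "Vout = {v \<in> V. outer_vertex r v}"
  define U where "U = {h \<in> D. outer_vertex r (orbit \<sigma> h)}"
  define W where "W = sum w D"
  define WO where "WO = sum w Od"
  define X where "X = sum w (U - Od)"
  have finV: "finite V" "finite F" "finite E" using fin by (auto simp: V_def F_def E_def verts_def faces_def edges_def)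
  have c1: "card D = d * card F"
  proof -
    have "card D = (\<Sum>q\<in>F. card q)" using orbit_sum[OF phip fin, of "\<lambda>_. 1::nat"] by (simp add: F_def faces_def)
    also have "\<dots> = (\<Sum>q\<in>F. d)" using fcard by (simp add: F_def)
    finally show ?thesis by simp
  qed
  have c2: "card D = 2 * card E"
  proof -
    have "card D = (\<Sum>q\<in>E. card q)" using orbit_sum[OF ap fin, of "\<lambda>_. 1::nat"] by (simp add: E_def edges_def)
    also have "\<dots> = (\<Sum>q\<in>E. 2)"
    proof (rule sum.cong)
      fix q assume "q \<in> E"
      then obtain h where "h \<in> D" "q = orbit \<alpha> h" by (auto simp: E_def edges_def)
      then have "q = {h, \<alpha> h}" "\<alpha> h \<noteq> h" using oa anf by auto
      then show "card q = 2" by auto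
    qed simp
    finally show ?thesis by simp
  qed
  have c3: "W = card Vout + d * card (V - Vout)"
  proof -
    have "W = (\<Sum>v\<in>V. sum w v)" using orbit_sum[OF sp fin, of w] by (simp add: W_def V_def verts_def)
    also have "\<dots> = (\<Sum>v\<in>V. if outer_vertex r v then 1 else d)" using vw by (simp add: V_def)
    also have "\<dots> = card (V \<inter> {v. outer_vertex r v}) + d * card (V \<inter> - {v. outer_vertex r v})"
      using sum.If_cases[OF finV(1), of "\<lambda>v. outer_vertex r v" "\<lambda>_. 1::nat" "\<lambda>_. d"] by simp
    also have "V \<inter> {v. outer_vertex r v} = Vout" by (auto simp: Vout_def)
    also have "V \<inter> - {v. outer_vertex r v} = V - Vout" by (auto simp: Vout_def)
    finally show ?thesis .
  qed
  have c4: "2 * W = card Od + (d - 2) * card (D - Od)"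
  proof -
    have "sum (\<lambda>h. w (\<alpha> h)) D = sum w D"
      using sum.reindex_bij_betw[OF permutes_imp_bij[OF ap], of w] .
    then have "2 * W = (\<Sum>h\<in>D. w h + w (\<alpha> h))" by (simp add: W_def sum.distrib)
    also have "\<dots> = (\<Sum>h\<in>D. if outer_dart \<alpha> r h then 1 else d - 2)" using ew by simp
    also have "\<dots> = card (D \<inter> {h. outer_dart \<alpha> r h}) + (d - 2) * card (D \<inter> - {h. outer_dart \<alpha> r h})"
      using sum.If_cases[OF fin, of "\<lambda>h. outer_dart \<alpha> r h" "\<lambda>_. 1::nat" "\<lambda>_. d - 2"] by simp
    also have "D \<inter> {h. outer_dart \<alpha> r h} = Od" by (auto simp: Od_def)
    also have "D \<inter> - {h. outer_dart \<alpha> r h} = D - Od" by (auto simp: Od_def)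
    finally show ?thesis .
  qed
  have finOd: "finite Od" using fin by (simp add: Od_def)
  have c5: "2 * WO = card Od"
  proof -
    have bij: "bij_betw \<alpha> Od Od"
    proof (rule bij_betw_imageI)
      show "inj_on \<alpha> Od" using permutes_inj[OF ap] by (simp add: inj_on_def inj_def)
      show "\<alpha> ` Od = Od"
      proof
        show "\<alpha> ` Od \<subseteq> Od" using oinv aD by (auto simp: Od_def)
        show "Od \<subseteq> \<alpha> ` Od"
        proof
          fix h assume h: "h \<in> Od"
          then have "\<alpha> h \<in> Od" "\<alpha> (\<alpha> h) = h" using oinv aD ainv by (auto simp: Od_def)
          then show "h \<in> \<alpha> ` Od" by (metis imageI)
        qed
      qed
    qed
    have "sum (\<lambda>h. w (\<alpha> h)) Od = sum w Od" using sum.reindex_bij_betw[OF bij, of w] .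
    then have "2 * WO = (\<Sum>h\<in>Od. w h + w (\<alpha> h))" by (simp add: WO_def sum.distrib)
    also have "\<dots> = (\<Sum>h\<in>Od. 1)" using ew by (simp add: Od_def)
    finally show ?thesis by simp
  qed
  have OdU: "Od \<subseteq> U" using OV by (auto simp: Od_def U_def)
  have finU: "finite U" using fin by (simp add: U_def)
  have c6: "card Vout = sum w U"
  proof -
    have "\<Union> Vout = U" using orb_self[OF sp fin] orb_sub[OF sp] orb_eq[OF sp fin]
      by (auto simp: Vout_def U_def V_def verts_def)
    moreover have "sum w (\<Union> Vout) = (\<Sum>v\<in>Vout. sum w v)"
    proof -
      have "sum w (\<Union> Vout) = (sum \<circ> sum) w Vout"
      proof (rule sum.Union_disjoint)
        show "\<forall>A\<in>Vout. finite A"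
        proof
          fix A assume "A \<in> Vout"
          then obtain x where "x \<in> D" "A = orbit \<sigma> x" by (auto simp: Vout_def V_def verts_def)
          then show "finite A" using orb_sub[OF sp] fin finite_subset by metis
        qed
        show "\<forall>A\<in>Vout. \<forall>B\<in>Vout. A \<noteq> B \<longrightarrow> A \<inter> B = {}"
        proof (intro ballI impI)
          fix A B assume "A \<in> Vout" "B \<in> Vout" "A \<noteq> B"
          then obtain x y where "A = orbit \<sigma> x" "B = orbit \<sigma> y" by (auto simp: Vout_def V_def verts_def)
          then show "A \<inter> B = {}" using orb_meet[OF sp fin] \<open>A \<noteq> B\<close> by blast
        qed
      qed
      then show ?thesis by simp
    qed
    moreover have "(\<Sum>v\<in>Vout. sum w v) = (\<Sum>v\<in>Vout. 1)" using vw by (simp add: Vout_def V_def)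
    ultimately show ?thesis by simp
  qed
  have c7: "sum w U = WO + X" unfolding WO_def X_def
    using sum.subset_diff[OF OdU finU, of w] by simp
  have c8: "d \<le> card Od"
  proof -
    have "r \<subseteq> Od" using rD oa unfolding Od_def outer_dart_def by auto
    then have "card r \<le> card Od" using finOd by (rule card_mono[rotated])
    then show ?thesis using fcard[OF rF] by simp
  qed
  have VV: "card V = card Vout + card (V - Vout)"
  proof -
    have sub: "Vout \<subseteq> V" by (auto simp: Vout_def)
    show ?thesis using card_Diff_subset[OF finite_subset[OF sub finV(1)] sub] card_mono[OF finV(1) sub] by simp
  qed
  have DD: "card D = card Od + card (D - Od)"
  proof -
    have sub: "Od \<subseteq> D" by (auto simp: Od_def)
    show ?thesis using card_Diff_subset[OF finOd sub] card_mono[OF fin sub] by simp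
  qed
  have key: "int (card Od) + (int d - 1) * int X = 2 * int d"
  proof (rule ak[where N = "int (card D)" and F = "int (card F)" and E = "int (card E)"
        and V = "int (card V)" and W = "int W" and Vo = "int (card Vout)" and Vi = "int (card (V - Vout))"
        and Ic = "int (card (D - Od))" and WO = "int WO"])
    show "int (card D) = int d * int (card F)" using c1 by simp
    show "int (card D) = 2 * int (card E)" using c2 by simp
    show "int (card V) + int (card F) = int (card E) + 2" using euler by (simp add: V_def F_def E_def)
    show "int (card V) = int (card Vout) + int (card (V - Vout))" using VV by simp
    show "int W = int (card Vout) + int d * int (card (V - Vout))" using c3 by simp
    show "int (card D) = int (card Od) + int (card (D - Od))" using DD by simp
    have "int (d - 2) = int d - 2" using d4 by simp
    then show "2 * int W = int (card Od) + (int d - 2) * int (card (D - Od))"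
      using arg_cong[OF c4, of int] by simp
    show "2 * int WO = int (card Od)" using c5 by simp
    show "int (card Vout) = int WO + int X" using c6 c7 by simp
  qed
  have X0: "X = 0"
  proof (rule ccontr)
    assume "X \<noteq> 0"
    show False
    proof (cases "X = 1")
      case True
      then have "card Od = d + 1" using key by simp
      then show False using c5 ev by presburger
    next
      case False
      then have "X \<ge> 2" using \<open>X \<noteq> 0\<close> by simp
      then have "(int d - 1) * int X \<ge> (int d - 1) * 2" using d4 by (intro mult_left_mono) auto
      moreover have "int d \<le> int (card Od)" using c8 by simp
      moreover have "(int d - 1) * 2 = 2 * int d - 2" by simp
      ultimately show False using key d4 by linarith
    qed
  qed
  have w0: "w h = 0" if "h \<in> U" "h \<notin> Od" for h
    using X0 that finU unfolding X_def by (simp add: sum_eq_0_iff)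
  have SD: "S \<subseteq> D" by (auto simp: S_def)
  have F1: "\<forall>h\<in>S. \<alpha> h \<in> S"
  proof
    fix h assume h: "h \<in> S"
    then have hD: "h \<in> D" "\<not> outer_dart \<alpha> r h" "odd (w h)" by (auto simp: S_def)
    have "even (d - 2)" using ev d4 by auto
    then have "even (w h + w (\<alpha> h))" using ew[OF hD(1)] hD(2) by simp
    then have "odd (w (\<alpha> h))" using hD(3) by simp
    then show "\<alpha> h \<in> S" using hD oinv aD by (auto simp: S_def)
  qed
  have pos: "\<forall>h\<in>S. 0 < w h" by (auto simp: S_def intro: odd_pos)
  have F3: "\<forall>h\<in>S. \<exists>g\<in>S. g \<in> orbit \<sigma> h \<and> g \<noteq> h"
  proof
    fix h assume hS: "h \<in> S"
    have hD: "h \<in> D" using hS SD by auto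
    have vv: "orbit \<sigma> h \<in> verts D \<sigma>" using hD by (auto simp: verts_def)
    have nov: "\<not> outer_vertex r (orbit \<sigma> h)"
    proof
      assume "outer_vertex r (orbit \<sigma> h)"
      then have "h \<in> U" "h \<notin> Od" using hD hS by (auto simp: U_def Od_def S_def)
      then show False using w0 hS by (simp add: S_def)
    qed
    have sw: "(\<Sum>x\<in>orbit \<sigma> h. w x) = d" using vw[OF vv] nov by simp
    have finv: "finite (orbit \<sigma> h)" using orb_sub[OF sp hD] fin finite_subset by blast
    have ec: "even (card {x \<in> orbit \<sigma> h. odd (w x)})"
      using even_card_odd[OF finv] sw ev by simp
    have eqs: "{x \<in> orbit \<sigma> h. odd (w x)} = S \<inter> orbit \<sigma> h"
    proof -
      have "\<not> outer_dart \<alpha> r x" if "x \<in> orbit \<sigma> h" for x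
      proof
        assume "outer_dart \<alpha> r x"
        moreover have "x \<in> D" using that orb_sub[OF sp hD] by auto
        ultimately have "outer_vertex r (orbit \<sigma> x)" using OV by blast
        then show False using nov orb_eq[OF sp fin that] by simp
      qed
      then show ?thesis using orb_sub[OF sp hD] by (auto simp: S_def)
    qed
    have hin: "h \<in> S \<inter> orbit \<sigma> h" using hS orb_self[OF sp fin] by auto
    have finS: "finite (S \<inter> orbit \<sigma> h)" using finv by auto
    have "card (S \<inter> orbit \<sigma> h) \<noteq> 1"
      using ec eqs by auto
    then have "\<not> (S \<inter> orbit \<sigma> h) \<subseteq> {h}"
    proof (intro notI)
      assume "card (S \<inter> orbit \<sigma> h) \<noteq> 1" "S \<inter> orbit \<sigma> h \<subseteq> {h}"
      then have "S \<inter> orbit \<sigma> h = {h}" using hin by auto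
      then show False using \<open>card (S \<inter> orbit \<sigma> h) \<noteq> 1\<close> by simp
    qed
    then show "\<exists>g\<in>S. g \<in> orbit \<sigma> h \<and> g \<noteq> h" by auto
  qed
  obtain hs where hs: "directed_circuit D \<alpha> \<sigma> w hs" "set hs \<subseteq> S"
    using find_circuit[OF fin sp ainv SD F1 pos F3 Sne] by blast
  have posh: "\<forall>h\<in>set hs. 0 < w h" using hs(2) pos by auto
  have rs: "directed_circuit D \<alpha> \<sigma> w (rev (map \<alpha> hs))"
    using circ_rev[OF hs(1) posh ainv aD] .
  have hne: "hs \<noteq> []" using hs(1) by (simp add: directed_circuit_def)
  obtain y where y: "y \<in> r" using x0 orbit_nonempty by fastforce
  have "y \<in> right_side \<alpha> \<sigma> (set hs) \<union> right_side \<alpha> \<sigma> (\<alpha> ` set hs)"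
    by (rule rs_cover[OF fin ainv aD _ _ conn, of _ "hd hs"]) (use hs SD hne y rD in auto)
  then have "ccw_circuit D \<alpha> \<sigma> r w hs \<or> ccw_circuit D \<alpha> \<sigma> r w (rev (map \<alpha> hs))"
    using hs(1) rs y unfolding ccw_circuit_def by auto
  then show False using mn unfolding minimal_orientation_def by blast
qed

theorem proposition16:
  fixes d :: nat
  assumes "even d" and "d \<ge> 4"
  shows "(\<forall>(D :: 'a set) B \<alpha> \<sigma> black w. branching_mobile d D B \<alpha> \<sigma> black w \<longrightarrow>
            (\<forall>h\<in>D - B. even (w h) \<and> w h \<le> d - 2))
       \<and> (\<forall>(D :: 'b set) \<alpha> \<sigma> r w. rooted_dangulation d D \<alpha> \<sigma> r \<and>
            dd2_orientation d D \<alpha> \<sigma> r w \<and> minimal_orientation D \<alpha> \<sigma> r w \<longrightarrow>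
            (\<forall>h\<in>D. \<not> outer_dart \<alpha> r h \<longrightarrow> even (w h)))"
proof (intro conjI allI impI ballI)
  fix D :: "'a set" and B \<alpha> \<sigma> black and w :: "'a \<Rightarrow> nat" and h
  assume bm: "branching_mobile d D B \<alpha> \<sigma> black w" and h: "h \<in> D - B"
  have "{h \<in> D - B. odd (w h)} = {}" by (rule part1[OF assms bm])
  then show "even (w h)" using h by blast
  have "w h + w (\<alpha> h) = d - 2" using bm h unfolding branching_mobile_def by blast
  then show "w h \<le> d - 2" by linarith
next
  fix D :: "'b set" and \<alpha> \<sigma> r and w :: "'b \<Rightarrow> nat" and h
  assume a: "rooted_dangulation d D \<alpha> \<sigma> r \<and> dd2_orientation d D \<alpha> \<sigma> r w \<and> minimal_orientation D \<alpha> \<sigma> r w"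
    and h: "h \<in> D" and n: "\<not> outer_dart \<alpha> r h"
  have "{h \<in> D. \<not> outer_dart \<alpha> r h \<and> odd (w h)} = {}" using part2[OF assms] a by blast
  then show "even (w h)" using h n by blast
qed

end
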